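(* Let $p,q$ be relatively prime integers with $1\le q<p$, write $p^2/(pq-1)=[b_1,\dots,b_r]$ and $p^2/(p^2-pq+1)=[a_1,\dots,a_e]$ (all entries $\ge 2$), and let $(i(\delta),j(\delta))$ be the $\delta$-position of $[b_1,\dots,b_r]$. Then, starting from (a regular neighborhood of) the $\delta$-half linear chain corresponding to $p^2/(pq-1)$ and blowing up appropriately (finitely many times, at points of the configuration, taking total transforms), one obtains (a regular neighborhood of) the linear chain of $2$-spheres $$B_1 - B_2 - \cdots - B_r - C - A_e - A_{e-1} - \cdots - A_{j(\delta)+2}$$ with self-intersections $B_i\cdot B_i=-b_i$, $C\cdot C=-1$, $A_k\cdot A_k=-a_k$ (where the part $A_e,\dots,A_{j(\delta)+2}$ is empty if $j(\delta)+2>e$).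
   Context: Hirzebruch--Jung continued fractions: $[b_r]=b_r$ and $[b_i,\dots,b_r]=b_i-1/[b_{i+1},\dots,b_r]$; for coprime $1\le a<n$, $n/a=[b_1,\dots,b_r]$ uniquely with all $b_i\ge2$, and the linear chain corresponding to $n/a$ is a chain of $2$-spheres (or smooth rational curves) $S_1,\dots,S_r$, $S_i\cdot S_i=-b_i$, consecutive ones meeting transversally once, others disjoint. Riemenschneider's dot diagram of $[b_1,\dots,b_r]$: place $b_i-1$ dots in row $i$, the first dot of row $i$ directly under the last dot of row $i-1$; column $j$ then contains $a_j-1$ dots where $n/(n-a)=[a_1,\dots,a_e]$. For $p^2/(pq-1)=[b_1,\dots,b_r]$ one has $\sum_i(b_i-1)=2r+1$; the dot $\delta$ is the $(r+1)$-th dot in reading order (rows top to bottom, each left to right), and its $\delta$-position $(i(\delta),j(\delta))$ is its row and column. The $\delta$-half linear chain is the linear chain $[b_1,\dots,b_{i(\delta)-1},b'_{i(\delta)}]$ whose dot diagram consists of the dots in rows $1,\dots,i(\delta)$ and columns $1,\dots,j(\delta)$ of the original diagram; equivalently $b'_{i(\delta)}-1$ is the number of dots of row $i(\delta)$ up to and including $\delta$. *)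

theory Defs
  imports Complex_Main
begin

text \<open>Hirzebruch--Jung continued fraction [b_1,...,b_r] (value on [] is junk).\<close>
fun hj :: "nat list \<Rightarrow> rat" where
  "hj [] = 0"
| "hj [b] = of_nat b"
| "hj (b # c # bs) = of_nat b - 1 / hj (c # bs)"

text \<open>Dot diagram of [b_1,...,b_r] (0-based list bs).  Row i (0-based) has bs!i - 1 dots.
  dots_before bs i = number of dots in rows 0..i-1.\<close>
definition dots_before :: "nat list \<Rightarrow> nat \<Rightarrow> nat" where
  "dots_before bs i = (\<Sum>k<i. bs ! k - 1)"

text \<open>0-based row of the dot delta, the (r+1)-th dot in reading order; i(delta) = delta_row0 + 1.\<close>
definition delta_row0 :: "nat list \<Rightarrow> nat" where
  "delta_row0 bs = (LEAST i. length bs + 1 \<le> dots_before bs (Suc i))"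

definition delta_in_row :: "nat list \<Rightarrow> nat" where
  "delta_in_row bs = length bs + 1 - dots_before bs (delta_row0 bs)"

text \<open>Column j(delta) (1-based). Row i (0-based) starts in column 1 + sum_{k<i} (b_k - 2),
  since the first dot of a row sits under the last dot of the previous row.\<close>
definition delta_col :: "nat list \<Rightarrow> nat" where
  "delta_col bs = (\<Sum>k<delta_row0 bs. bs ! k - 2) + delta_in_row bs"

definition half_chain :: "nat list \<Rightarrow> nat list" where
  "half_chain bs = take (delta_row0 bs) bs @ [delta_in_row bs + 1]"

text \<open>Configurations of spheres / rational curves, recorded combinatorially as a plumbing graph:
  vertex set, self-intersection numbers, and edges (2-element sets = one transverse intersection).\<close>
type_synonym config = "nat set \<times> (nat \<Rightarrow> int) \<times> nat set set"

definition chain_config :: "nat list \<Rightarrow> config" where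
  "chain_config bs = ({0..<length bs}, (\<lambda>i. - int (bs ! i)),
                      {{i, Suc i} | i. Suc i < length bs})"

text \<open>One blow-up at a point of the configuration, taking the total transform:
  either at a point of a single curve v lying on no other curve, or at the intersection point of
  two curves v, v'.\<close>
inductive blowup_step :: "config \<Rightarrow> config \<Rightarrow> bool" where
  at_point: "v \<in> V \<Longrightarrow> u \<notin> V \<Longrightarrow>
     blowup_step (V, w, E) (insert u V, w(v := w v - 1, u := -1), insert {v, u} E)"
| at_intersection: "{v, v'} \<in> E \<Longrightarrow> v \<noteq> v' \<Longrightarrow> v \<in> V \<Longrightarrow> v' \<in> V \<Longrightarrow> u \<notin> V \<Longrightarrow>
     blowup_step (V, w, E)
       (insert u V, w(v := w v - 1, v' := w v' - 1, u := -1),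
        insert {v, u} (insert {u, v'} (E - {{v, v'}})))"

definition config_iso :: "config \<Rightarrow> config \<Rightarrow> bool" where
  "config_iso C D = (case C of (V, w, E) \<Rightarrow> case D of (V', w', E') \<Rightarrow>
     \<exists>f. bij_betw f V V' \<and> (\<forall>v\<in>V. w' (f v) = w v) \<and>
         (\<forall>a\<in>V. \<forall>b\<in>V. {a, b} \<in> E \<longleftrightarrow> {f a, f b} \<in> E'))"

end

theory Submission
  imports Defs
begin


datatype m2 = M2 int int int int

fun mmul :: "m2 \<Rightarrow> m2 \<Rightarrow> m2" where
  "mmul (M2 a b c d) (M2 e f g h) = M2 (a*e + b*g) (a*f + b*h) (c*e + d*g) (c*f + d*h)"

definition I2 :: m2 where "I2 = M2 1 0 0 1"
definition mb :: "nat \<Rightarrow> m2" where "mb b = M2 (int b) (-1) 1 0"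
definition prd :: "nat list \<Rightarrow> m2" where "prd xs = foldr (\<lambda>b A. mmul (mb b) A) xs I2"
fun det2 :: "m2 \<Rightarrow> int" where "det2 (M2 a b c d) = a*d - b*c"
fun tr :: "m2 \<Rightarrow> m2" where "tr (M2 a b c d) = M2 a (-c) (-b) d"

lemma mmul_assoc: "mmul (mmul X Y) Z = mmul X (mmul Y Z)"
  by (cases X; cases Y; cases Z) (simp add: algebra_simps)

lemma mmul_I2[simp]: "mmul I2 X = X" "mmul X I2 = X"
  by (cases X, simp add: I2_def)+

lemma prd_Nil[simp]: "prd [] = I2" by (simp add: prd_def)
lemma prd_Cons[simp]: "prd (x#xs) = mmul (mb x) (prd xs)" by (simp add: prd_def)

lemma prd_append: "prd (xs @ ys) = mmul (prd xs) (prd ys)"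
  by (induction xs) (simp_all add: mmul_assoc)

lemma det_mmul: "det2 (mmul X Y) = det2 X * det2 Y"
  by (cases X; cases Y) (simp add: algebra_simps)

lemma det_prd: "det2 (prd xs) = 1"
  by (induction xs) (simp_all add: det_mmul mb_def I2_def)

lemma tr_mmul: "tr (mmul X Y) = mmul (tr Y) (tr X)"
  by (cases X; cases Y) (simp add: algebra_simps)

lemma prd_rev: "prd (rev xs) = tr (prd xs)"
  by (induction xs) (simp_all add: prd_append tr_mmul mb_def I2_def)

lemma hj_prd:
  "xs \<noteq> [] \<Longrightarrow> \<forall>b\<in>set xs. 2 \<le> b \<Longrightarrow> prd xs = M2 a b c d \<Longrightarrow>
     hj xs = of_int a / of_int c \<and> 1 \<le> c \<and> c < a"
proof (induction xs arbitrary: a b c d)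
  case Nil then show ?case by simp
next
  case (Cons x xs)
  show ?case
  proof (cases xs)
    case Nil
    with Cons.prems show ?thesis by (auto simp: mb_def I2_def)
  next
    case (Cons y ys)
    obtain a' b' c' d' where P: "prd xs = M2 a' b' c' d'" by (cases "prd xs")
    from Cons.IH[OF _ _ P] Cons.prems \<open>xs = y#ys\<close>
    have IH: "hj xs = of_int a' / of_int c'" "1 \<le> c'" "c' < a'" by auto
    have x2: "2 \<le> x" using Cons.prems by auto
    have e: "a = int x * a' - c'" "c = a'" using Cons.prems(3) P by (auto simp: mb_def)
    have "hj (x # xs) = of_nat x - 1 / hj xs" using \<open>xs = y#ys\<close> by simp
    also have "\<dots> = (of_int (int x * a' - c')) / of_int a'"
    proof -
      have nz: "(of_int a'::rat) \<noteq> 0" "(of_int c'::rat) \<noteq> 0" using IH by auto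
      show ?thesis unfolding IH(1) using nz by (simp add: field_simps)
    qed
    finally have h: "hj (x#xs) = of_int a / of_int c" using e by simp
    have "int x * a' - c' > a'"
    proof -
      have "int x * a' \<ge> 2 * a'" using x2 IH by (intro mult_right_mono) auto
      then show ?thesis using IH by linarith
    qed
    then show ?thesis using h e IH by auto
  qed
qed

lemma hj_gt1: "xs \<noteq> [] \<Longrightarrow> \<forall>b\<in>set xs. 2 \<le> b \<Longrightarrow> hj xs > 1"
proof -
  assume a: "xs \<noteq> []" "\<forall>b\<in>set xs. 2 \<le> b"
  obtain p q r s where P: "prd xs = M2 p q r s" by (cases "prd xs")
  from hj_prd[OF a P] show ?thesis by (simp add: field_simps)
qed

lemma hj_inj:
  "xs \<noteq> [] \<Longrightarrow> ys \<noteq> [] \<Longrightarrow> \<forall>b\<in>set xs. 2 \<le> b \<Longrightarrow> \<forall>b\<in>set ys. 2 \<le> b \<Longrightarrow>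
   hj xs = hj ys \<Longrightarrow> xs = ys"
proof (induction xs arbitrary: ys)
  case Nil then show ?case by simp
next
  case (Cons x xs)
  obtain y ys' where ys: "ys = y # ys'" using Cons.prems by (cases ys) auto
  show ?case
  proof (cases xs)
    case Nil
    show ?thesis
    proof (cases ys')
      case Nil
      with Cons.prems ys \<open>xs = []\<close> show ?thesis by simp
    next
      case (Cons z zs)
      have g: "hj ys' > 1" using hj_gt1[of ys'] Cons.prems ys \<open>ys' = z#zs\<close> by auto
      have "hj (x#xs) = of_nat x" using \<open>xs = []\<close> by simp
      moreover have "hj ys = of_nat y - 1 / hj ys'" using ys \<open>ys' = z#zs\<close> by simp
      ultimately have e: "of_nat x = (of_nat y - 1 / hj ys' :: rat)" using Cons.prems by simp
      have "0 < 1 / hj ys'" "1 / hj ys' < 1" using g by (auto simp: field_simps)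
      then have "(of_nat x :: rat) < of_nat y" "(of_nat y :: rat) < of_nat x + 1" using e by linarith+
      then have "x < y" "y < x + 1" by (simp_all add: of_nat_less_iff flip: of_nat_Suc)
      then show ?thesis by simp
    qed
  next
    case (Cons u us)
    show ?thesis
    proof (cases ys')
      case Nil
      have g: "hj xs > 1" using hj_gt1[of xs] Cons.prems \<open>xs = u#us\<close> by auto
      have "hj ys = of_nat y" using ys Nil by simp
      moreover have "hj (x#xs) = of_nat x - 1 / hj xs" using \<open>xs = u#us\<close> by simp
      ultimately have e: "of_nat y = (of_nat x - 1 / hj xs :: rat)" using Cons.prems by simp
      have "0 < 1 / hj xs" "1 / hj xs < 1" using g by (auto simp: field_simps)
      then have "(of_nat y :: rat) < of_nat x" "(of_nat x :: rat) < of_nat y + 1" using e by linarith+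
      then have "y < x" "x < y + 1" by (simp_all add: of_nat_less_iff flip: of_nat_Suc)
      then show ?thesis by simp
    next
      case (Cons z zs)
      have g1: "hj xs > 1" using hj_gt1[of xs] Cons.prems \<open>xs = u#us\<close> by auto
      have g2: "hj ys' > 1" using hj_gt1[of ys'] Cons.prems ys \<open>ys' = z#zs\<close> by auto
      have "hj ys = of_nat y - 1 / hj ys'" using ys Cons by simp
      moreover have "hj (x#xs) = of_nat x - 1 / hj xs" using \<open>xs = u#us\<close> by simp
      ultimately have e: "of_nat x - 1 / hj xs = (of_nat y - 1 / hj ys' :: rat)" using Cons.prems by simp
      have "0 < 1 / hj xs" "1 / hj xs < 1" "0 < 1 / hj ys'" "1 / hj ys' < 1" using g1 g2 by (auto simp: field_simps)
      then have "(of_nat y :: rat) < of_nat x + 1" "(of_nat x :: rat) < of_nat y + 1" using e by linarith+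
      then have "y < x + 1" "x < y + 1" by (simp_all add: of_nat_less_iff flip: of_nat_Suc)
      then have xy: "x = y" by simp
      with e have "hj xs = hj ys'" using g1 g2 by simp
      then have "xs = ys'" using Cons.IH[of ys'] Cons.prems ys \<open>xs = u#us\<close> \<open>ys' = z#zs\<close> by auto
      then show ?thesis using xy ys by simp
    qed
  qed
qed




definition Wm :: "int \<Rightarrow> int \<Rightarrow> m2" where
  "Wm p q = M2 (p^2) (-(p*(p-q)-1)) (p*q-1) (-(q*(p-q)-1))"

definition dsum :: "nat list \<Rightarrow> nat" where "dsum xs = sum_list (map (\<lambda>b. b - 1) xs)"

definition wd :: "nat list \<Rightarrow> bool" where
  "wd xs \<longleftrightarrow> dsum xs = 2 * length xs + 1 \<and> (\<forall>m. dsum (take m xs) \<noteq> length xs + 1)"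

lemma dsum_simps[simp]: "dsum [] = 0" "dsum (x#xs) = (x - 1) + dsum xs" "dsum (xs @ ys) = dsum xs + dsum ys"
  by (simp_all add: dsum_def)

lemma wd_L:
  assumes w: "wd (ys @ [c])" and c: "2 \<le> c"
  shows "wd (2 # ys @ [c+1])"
proof -
  have tot: "dsum ys + (c - 1) = 2 * length ys + 3" using w by (simp add: wd_def)
  have pre: "\<And>m. dsum (take m (ys @ [c])) \<noteq> length ys + 2" using w by (simp add: wd_def)
  have H: "dsum (take m (2 # ys @ [c+1])) \<noteq> length (2 # ys @ [c+1]) + 1" for m
  proof (cases m)
    case 0 then show ?thesis by simp
  next
    case (Suc m')
    show ?thesis
    proof (cases "m' \<le> length ys")
      case True
      have "take m' (ys @ [c]) = take m' ys" "take m' (ys @ [c+1]) = take m' ys" using True by simp_all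
      then show ?thesis using pre[of m'] Suc by simp
    next
      case False
      then have "take m' (ys @ [c+1]) = ys @ [c+1]" by simp
      then show ?thesis using Suc tot c by simp
    qed
  qed
  then show ?thesis unfolding wd_def using tot c by simp
qed

lemma wd_R:
  assumes w: "wd (c # ys)" and c: "2 \<le> c"
  shows "wd ((c+1) # ys @ [2])"
proof -
  have tot: "(c - 1) + dsum ys = 2 * length ys + 3" using w by (simp add: wd_def)
  have pre: "\<And>m. dsum (take m (c # ys)) \<noteq> length ys + 2" using w by (simp add: wd_def)
  have H: "dsum (take m ((c+1) # ys @ [2])) \<noteq> length ((c+1) # ys @ [2]) + 1" for m
  proof (cases m)
    case 0 then show ?thesis by simp
  next
    case (Suc m')
    show ?thesis
    proof (cases "m' \<le> length ys")
      case True
      have "take m' (ys @ [2]) = take m' ys" using True by simp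
      then show ?thesis using pre[of "Suc m'"] Suc c by simp
    next
      case False
      then have "take m' (ys @ [2]) = ys @ [2]" by simp
      then show ?thesis using Suc tot c by simp
    qed
  qed
  then show ?thesis unfolding wd_def using tot c by simp
qed

lemma wahl_ex:
  "coprime p q \<Longrightarrow> 1 \<le> q \<Longrightarrow> q < (p::nat) \<Longrightarrow>
   \<exists>cs. cs \<noteq> [] \<and> (\<forall>c\<in>set cs. 2 \<le> c) \<and> prd cs = Wm (int p) (int q) \<and> wd cs"
proof (induction p arbitrary: q rule: less_induct)
  case (less p)
  consider "2*q = p" | "p < 2*q" | "2*q < p" by linarith
  then show ?case
  proof cases
    case 1
    have "coprime (2*q) q" using less.prems 1 by simp
    then have "q = 1" by simp
    with 1 have pq: "p = 2" "q = 1" by auto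
    show ?thesis
    proof (rule exI[of _ "[4::nat]"])
      have H4: "dsum (take m [4]) \<noteq> Suc (Suc 0)" for m by (cases m) simp_all
      then show "[4::nat] \<noteq> [] \<and> (\<forall>c\<in>set [4::nat]. 2 \<le> c) \<and> prd [4] = Wm (int p) (int q) \<and> wd [4]"
        using H4 by (simp add: pq Wm_def mb_def I2_def wd_def)
    qed
  next
    case 2
    have cop: "coprime q (2*q - p)"
    proof -
      have "2*q - p = q - (p - q)" using 2 less.prems by linarith
      then have "gcd q (2*q - p) = gcd q (q - (p - q))" by simp
      also have "\<dots> = gcd (q - (p - q)) q" by (rule gcd.commute)
      also have "\<dots> = gcd (p - q) q" using 2 by (intro gcd_diff2_nat) linarith
      also have "\<dots> = gcd p q" using less.prems by (simp add: gcd_diff1_nat)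
      finally show ?thesis using less.prems by (simp add: coprime_iff_gcd_eq_1)
    qed
    have h: "1 \<le> 2*q - p" "2*q - p < q" using 2 less.prems by linarith+
    obtain cs where cs: "cs \<noteq> []" "\<forall>c\<in>set cs. 2 \<le> c" "prd cs = Wm (int q) (int (2*q - p))" "wd cs"
      using less.IH[OF _ cop h] less.prems by blast
    obtain ys c where ysc: "cs = ys @ [c]" using cs(1) by (cases cs rule: rev_cases) auto
    have c2: "2 \<le> c" using cs(2) ysc by auto
    let ?cs = "2 # ys @ [c+1]"
    have mbc: "mb (Suc c) = mmul (mb c) (M2 1 0 (-1) 1)" by (simp add: mb_def)
    have "prd ?cs = mmul (mb 2) (mmul (prd cs) (M2 1 0 (-1) 1))"
      by (simp add: prd_append ysc mbc mmul_assoc)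
    also have "\<dots> = Wm (int p) (int q)"
      unfolding cs(3) using 2 by (simp add: Wm_def mb_def of_nat_diff algebra_simps power2_eq_square)
    finally have P: "prd ?cs = Wm (int p) (int q)" .
    show ?thesis
      by (rule exI[of _ ?cs]) (use P cs(2) wd_L[OF cs(4)[unfolded ysc] c2] ysc in auto)
  next
    case 3
    have cop: "coprime (p - q) q"
      using less.prems by (simp add: coprime_iff_gcd_eq_1 gcd_diff1_nat)
    have h: "p - q < p" "q < p - q" using 3 less.prems by linarith+
    obtain cs where cs: "cs \<noteq> []" "\<forall>c\<in>set cs. 2 \<le> c" "prd cs = Wm (int (p - q)) (int q)" "wd cs"
      using less.IH[OF h(1) cop _ h(2)] less.prems by blast
    obtain ys c where ysc: "cs = c # ys" using cs(1) by (cases cs) auto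
    have c2: "2 \<le> c" using cs(2) ysc by auto
    let ?cs = "(c+1) # ys @ [2]"
    have mbc: "mb (Suc c) = mmul (M2 1 1 0 1) (mb c)" by (simp add: mb_def)
    have "prd ?cs = mmul (M2 1 1 0 1) (mmul (prd cs) (mb 2))"
      by (simp add: prd_append ysc mbc mmul_assoc)
    also have "\<dots> = Wm (int p) (int q)"
      unfolding cs(3) using 3 by (simp add: Wm_def mb_def of_nat_diff algebra_simps power2_eq_square)
    finally have P: "prd ?cs = Wm (int p) (int q)" .
    show ?thesis
      by (rule exI[of _ ?cs]) (use P cs(2) wd_R[OF cs(4)[unfolded ysc] c2] ysc in auto)
  qed
qed




fun edg :: "nat list \<Rightarrow> nat set set" where
  "edg (a # b # zs) = insert {a, b} (edg (b # zs))"
| "edg _ = {}"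

lemma edg_nth: "edg vs = {{vs!i, vs!Suc i} | i. Suc i < length vs}"
proof (induction vs rule: edg.induct)
  case (1 a b zs)
  show ?case
    unfolding edg.simps 1
  proof (intro set_eqI iffI)
    fix e assume "e \<in> insert {a, b} {{(b # zs) ! i, (b # zs) ! Suc i} |i. Suc i < length (b # zs)}"
    then show "e \<in> {{(a # b # zs) ! i, (a # b # zs) ! Suc i} |i. Suc i < length (a # b # zs)}"
    proof (rule insertE)
      assume "e = {a, b}" then show ?thesis by force
    next
      assume "e \<in> {{(b # zs) ! i, (b # zs) ! Suc i} |i. Suc i < length (b # zs)}"
      then obtain i where "e = {(b # zs) ! i, (b # zs) ! Suc i}" "Suc i < length (b # zs)" by blast
      then have "e = {(a # b # zs) ! Suc i, (a # b # zs) ! Suc (Suc i)}" "Suc (Suc i) < length (a # b # zs)" by simp_all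
      then show ?thesis by blast
    qed
  next
    fix e assume "e \<in> {{(a # b # zs) ! i, (a # b # zs) ! Suc i} |i. Suc i < length (a # b # zs)}"
    then obtain i where i: "e = {(a # b # zs) ! i, (a # b # zs) ! Suc i}" "Suc i < length (a # b # zs)" by blast
    show "e \<in> insert {a, b} {{(b # zs) ! i, (b # zs) ! Suc i} |i. Suc i < length (b # zs)}"
    proof (cases i)
      case 0 then show ?thesis using i by simp
    next
      case (Suc j)
      then have "e = {(b # zs) ! j, (b # zs) ! Suc j}" "Suc j < length (b # zs)" using i by simp_all
      then show ?thesis by blast
    qed
  qed
qed auto

lemma edg_app: "edg (xs @ y # ys) = (if xs = [] then {} else {{last xs, y}}) \<union> edg xs \<union> edg (y # ys)"
proof (induction xs)
  case Nil then show ?case by simp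
next
  case (Cons x xs)
  then show ?case by (cases xs) auto
qed

lemma edg_sub: "e \<in> edg xs \<Longrightarrow> e \<subseteq> set xs"
  by (induction xs rule: edg.induct) auto

definition greach :: "nat list \<Rightarrow> nat list \<Rightarrow> bool" where
  "greach L0 L \<longleftrightarrow> (\<exists>vs w. distinct vs \<and> map w vs = map (\<lambda>b. - int b) L \<and>
      blowup_step\<^sup>*\<^sup>* (chain_config L0) (set vs, w, edg vs))"

lemma greach_refl: "greach L L"
proof -
  let ?n = "length L"
  have e: "edg [0..<?n] = {{i, Suc i} | i. Suc i < ?n}"
    unfolding edg_nth
  proof (rule Collect_cong)
    fix e
    show "(\<exists>i. e = {[0..<?n]!i, [0..<?n]!Suc i} \<and> Suc i < length [0..<?n]) = (\<exists>i. e = {i, Suc i} \<and> Suc i < ?n)"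
    proof
      assume "\<exists>i. e = {[0..<?n]!i, [0..<?n]!Suc i} \<and> Suc i < length [0..<?n]"
      then obtain i where "e = {[0..<?n]!i, [0..<?n]!Suc i}" "Suc i < length [0..<?n]" by blast
      then show "\<exists>i. e = {i, Suc i} \<and> Suc i < ?n" by (intro exI[of _ i]) (simp del: upt_Suc)
    next
      assume "\<exists>i. e = {i, Suc i} \<and> Suc i < ?n"
      then obtain i where "e = {i, Suc i}" "Suc i < ?n" by blast
      then show "\<exists>i. e = {[0..<?n]!i, [0..<?n]!Suc i} \<and> Suc i < length [0..<?n]" by (intro exI[of _ i]) (simp del: upt_Suc)
    qed
  qed
  have "chain_config L = (set [0..<?n], (\<lambda>i. - int (L!i)), edg [0..<?n])"
    unfolding chain_config_def e by simp
  moreover have "map (\<lambda>i. - int (L!i)) [0..<?n] = map (\<lambda>b. - int b) L"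
  proof -
    have "map (\<lambda>b. - int b) L = map (\<lambda>b. - int b) (map ((!) L) [0..<?n])" by (simp only: map_nth)
    then show ?thesis by (simp only: map_map comp_def)
  qed
  ultimately show ?thesis unfolding greach_def
    by (intro exI[of _ "[0..<?n]"] exI[of _ "\<lambda>i. - int (L!i)"]) simp
qed

lemma fresh: "\<exists>u::nat. u \<notin> set vs"
  using ex_new_if_finite[OF infinite_UNIV_nat, of "set vs"] by simp

lemma greach_E:
  assumes "greach L0 (X @ [x])"
  shows "greach L0 (X @ [Suc x, 1])"
proof -
  obtain vs w where vs: "distinct vs" "map w vs = map (\<lambda>b. - int b) (X @ [x])"
    "blowup_step\<^sup>*\<^sup>* (chain_config L0) (set vs, w, edg vs)"
    using assms unfolding greach_def by blast
  from vs(2) obtain P v where P: "vs = P @ [v]" "map w P = map (\<lambda>b. - int b) X" "w v = - int x"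
    by (auto simp: map_eq_append_conv map_eq_Cons_conv)
  obtain u where u: "u \<notin> set vs" using fresh by blast
  have vV: "v \<in> set vs" using P by simp
  have st: "blowup_step (set vs, w, edg vs)
      (insert u (set vs), w(v := w v - 1, u := -1), insert {v, u} (edg vs))"
    by (rule blowup_step.at_point[OF vV u])
  let ?vs = "P @ [v, u]"
  let ?w = "w(v := w v - 1, u := -1)"
  have d: "distinct ?vs" using vs(1) u P by auto
  have s: "set ?vs = insert u (set vs)" using P by auto
  have e: "edg ?vs = insert {v, u} (edg vs)"
    using P edg_app[of P v "[u]"] edg_app[of P v "[]"] by auto
  have vP: "v \<notin> set P" "u \<notin> set P" "u \<noteq> v" using vs(1) u P by auto
  have m: "map ?w ?vs = map (\<lambda>b. - int b) (X @ [Suc x, 1])"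
    using vP P by simp
  have "blowup_step\<^sup>*\<^sup>* (chain_config L0) (set ?vs, ?w, edg ?vs)"
    using rtranclp.rtrancl_into_rtrancl[OF vs(3) st] s e by simp
  then show ?thesis unfolding greach_def using d m by blast
qed

lemma greach_I:
  assumes "greach L0 (X @ x # y # Z)"
  shows "greach L0 (X @ Suc x # 1 # Suc y # Z)"
proof -
  obtain vs w where vs: "distinct vs" "map w vs = map (\<lambda>b. - int b) (X @ x # y # Z)"
    "blowup_step\<^sup>*\<^sup>* (chain_config L0) (set vs, w, edg vs)"
    using assms unfolding greach_def by blast
  from vs(2) obtain P v v' S where P: "vs = P @ v # v' # S" "map w P = map (\<lambda>b. - int b) X"
    "w v = - int x" "w v' = - int y" "map w S = map (\<lambda>b. - int b) Z"
    by (auto simp: map_eq_append_conv map_eq_Cons_conv)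
  obtain u where u: "u \<notin> set vs" using fresh by blast
  have vV: "v \<in> set vs" "v' \<in> set vs" using P by auto
  have dist: "v \<notin> set P" "v' \<notin> set P" "v \<noteq> v'" "v \<notin> set S" "v' \<notin> set S"
    "u \<notin> set P" "u \<notin> set S" "u \<noteq> v" "u \<noteq> v'" using vs(1) u P by auto
  have ee: "edg vs = (if P = [] then {} else {{last P, v}}) \<union> edg P \<union> insert {v, v'} (edg (v' # S))"
    using P edg_app[of P v "v' # S"] by simp
  have E: "{v, v'} \<in> edg vs" using ee by auto
  have st: "blowup_step (set vs, w, edg vs)
      (insert u (set vs), w(v := w v - 1, v' := w v' - 1, u := -1),
        insert {v, u} (insert {u, v'} (edg vs - {{v, v'}})))"
    by (rule blowup_step.at_intersection[OF E dist(3) vV u])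
  let ?vs = "P @ v # u # v' # S"
  let ?w = "w(v := w v - 1, v' := w v' - 1, u := -1)"
  have d: "distinct ?vs" using vs(1) u P by auto
  have s: "set ?vs = insert u (set vs)" using P by auto
  have n1: "{v, v'} \<notin> edg P" using edg_sub[of "{v,v'}" P] dist by auto
  have n2: "{v, v'} \<notin> edg (v' # S)" using edg_sub[of "{v,v'}" "v' # S"] dist by auto
  have n3: "P \<noteq> [] \<Longrightarrow> {last P, v} \<noteq> {v, v'}"
  proof
    assume "P \<noteq> []" "{last P, v} = {v, v'}"
    then have "last P = v'" using dist by (auto simp: doubleton_eq_iff)
    then show False using \<open>P \<noteq> []\<close> dist by (metis last_in_set)
  qed
  have e: "edg ?vs = insert {v, u} (insert {u, v'} (edg vs - {{v, v'}}))"
  proof -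
    have "edg ?vs = (if P = [] then {} else {{last P, v}}) \<union> edg P \<union> insert {v,u} (insert {u,v'} (edg (v' # S)))"
      using edg_app[of P v "u # v' # S"] by simp
    then show ?thesis using ee n1 n2 n3 by auto
  qed
  have m: "map ?w ?vs = map (\<lambda>b. - int b) (X @ Suc x # 1 # Suc y # Z)"
    using dist P by simp
  have "blowup_step\<^sup>*\<^sup>* (chain_config L0) (set ?vs, ?w, edg ?vs)"
    using rtranclp.rtrancl_into_rtrancl[OF vs(3) st] s e by simp
  then show ?thesis unfolding greach_def using d m by blast
qed

lemma greach_iso:
  assumes "greach L0 L"
  shows "\<exists>C. blowup_step\<^sup>*\<^sup>* (chain_config L0) C \<and> config_iso C (chain_config L)"
proof -
  obtain vs w where vs: "distinct vs" "map w vs = map (\<lambda>b. - int b) L"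
    "blowup_step\<^sup>*\<^sup>* (chain_config L0) (set vs, w, edg vs)"
    using assms unfolding greach_def by blast
  let ?n = "length L"
  have len: "length vs = ?n" using arg_cong[OF vs(2), of length] by simp
  have b: "bij_betw ((!) vs) {0..<?n} (set vs)"
    using bij_betw_nth[OF vs(1)] len by (simp add: lessThan_atLeast0)
  let ?f = "inv_into {0..<?n} ((!) vs)"
  have bf: "bij_betw ?f (set vs) {0..<?n}" by (rule bij_betw_inv_into[OF b])
  have inj: "inj_on ((!) vs) {0..<?n}" using b by (rule bij_betw_imp_inj_on)
  have fi: "i < ?n \<Longrightarrow> ?f (vs!i) = i" for i using inv_into_f_f[OF inj] by simp
  have wi: "i < ?n \<Longrightarrow> w (vs!i) = - int (L!i)" for i
    using arg_cong[OF vs(2), of "\<lambda>l. l!i"] len by simp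
  have eq2: "i < ?n \<Longrightarrow> j < ?n \<Longrightarrow> k < ?n \<Longrightarrow> l < ?n \<Longrightarrow>
      ({vs!i, vs!j} = {vs!k, vs!l}) = ({i, j} = {k, l})" for i j k l
    using nth_eq_iff_index_eq[OF vs(1)] len by (auto simp: doubleton_eq_iff)
  have edges: "({vs!i, vs!j} \<in> edg vs) = ({i, j} \<in> {{k, Suc k} | k. Suc k < ?n})"
    if "i < ?n" "j < ?n" for i j
  proof -
    have "({vs!i, vs!j} \<in> edg vs) = (\<exists>k. Suc k < ?n \<and> {vs!i, vs!j} = {vs!k, vs!Suc k})"
      unfolding edg_nth using len by auto
    also have "\<dots> = (\<exists>k. Suc k < ?n \<and> {i, j} = {k, Suc k})"
      using eq2 that by (metis Suc_lessD)
    finally show ?thesis by auto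
  qed
  have "config_iso (set vs, w, edg vs) (chain_config L)"
    unfolding config_iso_def chain_config_def
  proof (simp, intro exI[of _ ?f] conjI)
    show "bij_betw ?f (set vs) {0..<?n}" by (rule bf)
    show "\<forall>v\<in>set vs. - int (L ! ?f v) = w v"
      using fi wi len by (auto simp: in_set_conv_nth)
    show "\<forall>a\<in>set vs. \<forall>b\<in>set vs. ({a, b} \<in> edg vs) = (\<exists>i. {?f a, ?f b} = {i, Suc i} \<and> Suc i < ?n)"
    proof (intro ballI)
      fix a b assume "a \<in> set vs" "b \<in> set vs"
      then obtain i j where ij: "i < ?n" "j < ?n" "a = vs!i" "b = vs!j" using len by (auto simp: in_set_conv_nth)
      show "({a, b} \<in> edg vs) = (\<exists>i. {?f a, ?f b} = {i, Suc i} \<and> Suc i < ?n)"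
        using edges[OF ij(1,2)] ij fi by auto
    qed
  qed
  then show ?thesis using vs(3) by blast
qed




fun inc_hd :: "nat list \<Rightarrow> nat list" where
  "inc_hd [] = []" | "inc_hd (y # ys) = Suc y # ys"

definition st :: "nat list \<Rightarrow> nat \<Rightarrow> nat list" where
  "st Y b = replicate (b - 2) 2 @ inc_hd Y"

lemma gR: "greach L0 (X @ c # 1 # Y) \<Longrightarrow> greach L0 (X @ (c + k) # 1 # replicate k 2 @ Y)"
proof (induction k)
  case 0 then show ?case by simp
next
  case (Suc k)
  have "greach L0 (X @ (c + k) # 1 # (replicate k 2 @ Y))" using Suc by simp
  from greach_I[OF this] show ?case by (simp add: numeral_2_eq_2)
qed

lemma gD: "greach L0 (X @ 1 # Y) \<Longrightarrow> greach L0 (X @ 2 # 1 # inc_hd Y)"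
proof (cases Y)
  case Nil
  assume "greach L0 (X @ 1 # Y)"
  then have "greach L0 (X @ [1])" using Nil by simp
  from greach_E[OF this] show ?thesis using Nil by (simp add: numeral_2_eq_2)
next
  case (Cons y Y')
  assume "greach L0 (X @ 1 # Y)"
  then have "greach L0 (X @ 1 # y # Y')" using Cons by simp
  from greach_I[OF this] show ?thesis using Cons by (simp add: numeral_2_eq_2)
qed

lemma grow: "2 \<le> b \<Longrightarrow> greach L0 (X @ 1 # Y) \<Longrightarrow> greach L0 (X @ b # 1 # st Y b)"
proof -
  assume b: "2 \<le> b" and g: "greach L0 (X @ 1 # Y)"
  have e: "2 + (b - 2) = b" using b by simp
  have "greach L0 (X @ (2 + (b-2)) # 1 # replicate (b-2) 2 @ inc_hd Y)" by (rule gR[OF gD[OF g]])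
  then show ?thesis unfolding e st_def by simp
qed

lemma grows: "\<forall>b\<in>set rows. 2 \<le> b \<Longrightarrow> greach L0 (X @ 1 # Y) \<Longrightarrow>
   greach L0 (X @ rows @ 1 # foldl st Y rows)"
proof (induction rows arbitrary: X Y)
  case Nil then show ?case by simp
next
  case (Cons b rows)
  have "greach L0 ((X @ [b]) @ 1 # st Y b)" using grow[of b L0 X Y] Cons.prems by simp
  from Cons.IH[OF _ this] Cons.prems show ?case by simp
qed

lemma loc1: "mmul (mb c) (mmul (mb 1) Z) = mmul (mb (Suc c)) (mmul (mb 1) (mmul (mb 2) Z))"
  by (cases Z) (simp add: mb_def algebra_simps)

lemma loc2: "mmul (mb 1) (mmul (mb y) Z) = mmul (mb 2) (mmul (mb 1) (mmul (mb (Suc y)) Z))"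
  by (cases Z) (simp add: mb_def algebra_simps)

lemma pR: "prd (c # 1 # Y) = prd ((c + k) # 1 # replicate k 2 @ Y)"
proof (induction k)
  case 0 then show ?case by simp
next
  case (Suc k)
  have "prd ((c + Suc k) # 1 # replicate (Suc k) 2 @ Y) = mmul (mb (Suc (c+k))) (mmul (mb 1) (mmul (mb 2) (prd (replicate k 2 @ Y))))"
    by simp
  also have "\<dots> = mmul (mb (c+k)) (mmul (mb 1) (prd (replicate k 2 @ Y)))" by (rule loc1[symmetric])
  also have "\<dots> = prd ((c+k) # 1 # replicate k 2 @ Y)" by simp
  finally show ?case using Suc by simp
qed

lemma prow: "Y \<noteq> [] \<Longrightarrow> 2 \<le> b \<Longrightarrow> prd (b # 1 # st Y b) = prd (1 # Y)"
proof -
  assume "Y \<noteq> []" "2 \<le> b"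
  then obtain y Y' where Y: "Y = y # Y'" by (cases Y) auto
  have "prd (1 # Y) = mmul (mb 1) (mmul (mb y) (prd Y'))" using Y by simp
  also have "\<dots> = mmul (mb 2) (mmul (mb 1) (mmul (mb (Suc y)) (prd Y')))" by (rule loc2)
  also have "\<dots> = prd (2 # 1 # inc_hd Y)" using Y by simp
  finally have "prd (1 # Y) = prd (2 # 1 # inc_hd Y)" .
  also have "\<dots> = prd ((2 + (b - 2)) # 1 # replicate (b - 2) 2 @ inc_hd Y)" by (rule pR)
  also have "2 + (b - 2) = b" using \<open>2 \<le> b\<close> by simp
  finally show ?thesis unfolding st_def by simp
qed

lemma st_ne: "Y \<noteq> [] \<Longrightarrow> st Y b \<noteq> []"
  by (cases Y) (auto simp: st_def)

lemma prows: "Y \<noteq> [] \<Longrightarrow> \<forall>b\<in>set rows. 2 \<le> b \<Longrightarrow> prd (rows @ 1 # foldl st Y rows) = prd (1 # Y)"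
proof (induction rows arbitrary: Y)
  case Nil then show ?case by simp
next
  case (Cons b rows)
  have "prd (rows @ 1 # foldl st (st Y b) rows) = prd (1 # st Y b)"
    using Cons.IH[OF st_ne[OF Cons.prems(1)]] Cons.prems by simp
  then have "prd ((b # rows) @ 1 # foldl st Y (b # rows)) = prd (b # 1 # st Y b)" by simp
  also have "\<dots> = prd (1 # Y)" using prow Cons.prems by simp
  finally show ?case .
qed

lemma foldl_ne: "Y \<noteq> [] \<Longrightarrow> foldl st Y rows \<noteq> []"
  by (induction rows arbitrary: Y) (auto simp: st_ne)

lemma inc_hd_ge: "\<forall>y\<in>set Y. 2 \<le> y \<Longrightarrow> \<forall>y\<in>set (inc_hd Y). 2 \<le> y"
  by (cases Y) auto

lemma foldl_ge: "\<forall>y\<in>set Y. 2 \<le> y \<Longrightarrow> \<forall>y\<in>set (foldl st Y rows). 2 \<le> y"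
proof (induction rows arbitrary: Y)
  case Nil then show ?case by simp
next
  case (Cons b rows)
  have "\<forall>y\<in>set (st Y b). 2 \<le> y" using inc_hd_ge[OF Cons.prems] by (auto simp: st_def)
  then show ?case using Cons.IH by simp
qed

lemma len_inc_hd[simp]: "length (inc_hd Y) = length Y" by (cases Y) auto

lemma len_foldl: "length (foldl st Y rows) = length Y + sum_list (map (\<lambda>b. b - 2) rows)"
  by (induction rows arbitrary: Y) (auto simp: st_def)

lemma inc_hd_app: "Y1 \<noteq> [] \<Longrightarrow> inc_hd (Y1 @ T) = inc_hd Y1 @ T"
  by (cases Y1) auto

lemma foldl_split: "\<exists>T'. length T' = length T \<and> foldl st (Y1 @ T) rows = foldl st Y1 rows @ T'"
proof (induction rows arbitrary: Y1 T)
  case Nil then show ?case by auto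
next
  case (Cons b rows)
  show ?case
  proof (cases "Y1 = []")
    case True
    have eq: "st (Y1 @ T) b = st Y1 b @ inc_hd T" using True by (simp add: st_def)
    obtain T' where T': "length T' = length (inc_hd T)" "foldl st (st Y1 b @ inc_hd T) rows = foldl st (st Y1 b) rows @ T'"
      using Cons.IH by blast
    have "foldl st (Y1 @ T) (b # rows) = foldl st (st Y1 b @ inc_hd T) rows" by (simp only: foldl_Cons eq)
    then show ?thesis using T' by (intro exI[of _ T']) simp
  next
    case False
    have eq: "st (Y1 @ T) b = st Y1 b @ T" using False by (simp add: st_def inc_hd_app)
    obtain T' where T': "length T' = length T" "foldl st (st Y1 b @ T) rows = foldl st (st Y1 b) rows @ T'"
      using Cons.IH by blast
    have "foldl st (Y1 @ T) (b # rows) = foldl st (st Y1 b @ T) rows" by (simp only: foldl_Cons eq)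
    then show ?thesis using T' by (intro exI[of _ T']) simp
  qed
qed

lemma sum_take: "m \<le> length xs \<Longrightarrow> (\<Sum>k<m. f (xs!k)) = sum_list (map f (take m xs))"
proof (induction m)
  case 0 then show ?case by simp
next
  case (Suc m)
  then show ?case by (simp add: take_Suc_conv_app_nth)
qed

fun adj :: "m2 \<Rightarrow> m2" where "adj (M2 a b c d) = M2 d (-b) (-c) a"

lemma adj_inv: "det2 G = 1 \<Longrightarrow> mmul (adj G) (mmul G Z) = Z"
proof (cases G; cases Z)
  fix a b c d e f g h assume G: "G = M2 a b c d" and Z: "Z = M2 e f g h" and det: "det2 G = 1"
  have h: "a*d - b*c = 1" using det G by simp
  have 1: "d*(a*x + b*y) + (-b)*(c*x + d*y) = (a*d - b*c)*x" for x y :: int by (simp add: algebra_simps)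
  have 2: "(-c)*(a*x + b*y) + a*(c*x + d*y) = (a*d - b*c)*y" for x y :: int by (simp add: algebra_simps)
  show ?thesis unfolding G Z using 1 2 h by simp
qed




theorem corollary3p13:
  fixes p q :: nat and bs as :: "nat list"
  assumes "coprime p q" and "1 \<le> q" and "q < p"
    and "bs \<noteq> []" and "\<forall>b\<in>set bs. 2 \<le> b"
    and "hj bs = of_nat (p^2) / of_nat (p * q - 1)"
    and "as \<noteq> []" and "\<forall>a\<in>set as. 2 \<le> a"
    and "hj as = of_nat (p^2) / of_nat (p^2 - p * q + 1)"
  shows "\<exists>C. blowup_step\<^sup>*\<^sup>* (chain_config (half_chain bs)) C \<and>
             config_iso C (chain_config (bs @ [1] @ rev (drop (delta_col bs + 1) as)))"
proof -
  obtain cs where cs: "cs \<noteq> []" "\<forall>c\<in>set cs. 2 \<le> c" "prd cs = Wm (int p) (int q)" "wd cs"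
    using wahl_ex[OF assms(1-3)] by blast
  have pq1: "1 \<le> p * q" using assms(2,3) by simp
  have pq2: "p * q \<le> p^2" using assms(3) by (simp add: power2_eq_square)
  have hjcs: "hj cs = of_nat (p^2) / of_nat (p*q - 1)"
  proof -
    have "hj cs = of_int (int p ^ 2) / of_int (int p * int q - 1)"
      using hj_prd[OF cs(1) cs(2) cs(3)[unfolded Wm_def]] by simp
    moreover have "(of_nat (p*q - 1) :: rat) = of_int (int p * int q - 1)"
      using pq1 by (simp add: of_nat_diff)
    ultimately show ?thesis by simp
  qed
  have bscs: "bs = cs" using hj_inj[OF assms(4) cs(1) assms(5) cs(2)] hjcs assms(6) by simp
  define r where "r = length bs"
  have r1: "1 \<le> r" using assms(4) r_def by (cases bs) auto
  define DB where "DB m = dsum (take m bs)" for m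
  have dbe: "dots_before bs m = DB m" if "m \<le> r" for m
    unfolding dots_before_def DB_def dsum_def using sum_take[of m bs "\<lambda>b. b - 1"] that r_def by simp
  have tot: "DB r = 2 * r + 1" using cs(4) bscs unfolding DB_def r_def wd_def by simp
  have ne: "DB m \<noteq> r + 1" for m using cs(4) bscs unfolding DB_def r_def wd_def by simp
  define i0 where "i0 = delta_row0 bs"
  have ex: "length bs + 1 \<le> dots_before bs (Suc (r - 1))"
  proof -
    have "Suc (r - 1) = r" using r1 by simp
    then show ?thesis using dbe[of r] tot r_def by simp
  qed
  have i0le: "i0 \<le> r - 1" unfolding i0_def delta_row0_def by (rule Least_le) (rule ex)
  have i0r: "i0 < r" using i0le r1 by simp
  have h1: "length bs + 1 \<le> dots_before bs (Suc i0)" unfolding i0_def delta_row0_def by (rule LeastI) (rule ex)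
  have h2: "dots_before bs i0 < r + 1"
  proof (cases i0)
    case 0 then show ?thesis by (simp add: dots_before_def)
  next
    case (Suc j)
    have "j < i0" using Suc by simp
    then have "\<not> (length bs + 1 \<le> dots_before bs (Suc j))"
      unfolding i0_def delta_row0_def by (rule not_less_Least)
    then show ?thesis using Suc r_def by simp
  qed
  have DBs: "DB (Suc i0) = DB i0 + (bs!i0 - 1)"
    unfolding DB_def using i0r r_def by (simp add: take_Suc_conv_app_nth)
  have A1: "r + 1 \<le> DB (Suc i0)" using h1 dbe[of "Suc i0"] i0r r_def by simp
  have A2: "DB i0 < r + 1" using h2 dbe[of i0] i0r by simp
  have A3: "DB (Suc i0) \<noteq> r + 1" by (rule ne)
  define d where "d = delta_in_row bs"
  have d_eq: "d = r + 1 - DB i0" unfolding d_def delta_in_row_def using dbe[of i0] i0r r_def i0_def by simp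
  have bd: "d + 2 \<le> bs!i0" using A1 A2 A3 DBs d_eq by linarith
  have half: "half_chain bs = take i0 bs @ [d + 1]" unfolding half_chain_def i0_def d_def by simp
  define Y0 where "Y0 = foldl st [1] (take i0 bs)"
  have lenY0: "length Y0 = 1 + sum_list (map (\<lambda>b. b - 2) (take i0 bs))"
    unfolding Y0_def by (simp add: len_foldl)
  have col: "delta_col bs = sum_list (map (\<lambda>b. b - 2) (take i0 bs)) + d"
    unfolding delta_col_def d_def i0_def[symmetric] using sum_take[of i0 bs "\<lambda>b. b - 2"] i0r r_def by simp
  define k where "k = bs!i0 - d - 2"
  define T0 where "T0 = replicate d 2 @ inc_hd Y0"
  define rows where "rows = drop (Suc i0) bs"
  define Yp where "Yp = foldl st (replicate k 2) rows"
  have bsdec: "bs = take i0 bs @ bs!i0 # rows" unfolding rows_def using i0r r_def by (simp add: id_take_nth_drop)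
  have stY0: "st Y0 (bs!i0) = replicate k 2 @ T0"
  proof -
    have "bs!i0 - 2 = k + d" unfolding k_def using bd by simp
    then show ?thesis unfolding st_def T0_def by (simp add: replicate_add)
  qed
  define Yf where "Yf = foldl st [1] bs"
  have Yf_eq: "Yf = foldl st (replicate k 2 @ T0) rows"
  proof -
    have "Yf = foldl st (foldl st [1] (take i0 bs)) (bs!i0 # rows)"
      unfolding Yf_def by (subst bsdec) (simp only: foldl_append)
    also have "\<dots> = foldl st (replicate k 2 @ T0) rows" using stY0 unfolding Y0_def by simp
    finally show ?thesis .
  qed
  obtain T' where T': "length T' = length T0" "Yf = Yp @ T'"
    using foldl_split[of T0 "replicate k 2" rows] Yf_eq Yp_def by auto
  have lenT': "length T' = delta_col bs + 1" using T'(1) lenY0 col unfolding T0_def by simp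
  have bs2: "\<forall>b\<in>set bs. 2 \<le> b" by (rule assms(5))
  have "prd (bs @ 1 # Yf) = prd (1 # [1])"
    unfolding Yf_def by (rule prows) (use bs2 in auto)
  then have eqm: "mmul (mmul (Wm (int p) (int q)) (mb 1)) (prd Yf) = mmul (mb 1) (mmul (mb 1) I2)"
    using cs(3) bscs by (simp add: prd_append mmul_assoc)
  have detG: "det2 (mmul (Wm (int p) (int q)) (mb 1)) = 1"
    using det_prd[of cs] cs(3) by (simp add: det_mmul mb_def)
  have pY: "prd Yf = mmul (adj (mmul (Wm (int p) (int q)) (mb 1))) (mmul (mb 1) (mmul (mb 1) I2))"
    using adj_inv[OF detG, of "prd Yf"] eqm by simp
  obtain x y z w where xyzw: "prd Yf = M2 x y z w" by (cases "prd Yf")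
  have xy: "x = int p ^ 2" "- y = int p ^ 2 - int p * int q + 1"
    using pY xyzw by (simp_all add: Wm_def mb_def I2_def algebra_simps power2_eq_square)
  have Yf_ne: "Yf \<noteq> []" unfolding Yf_def by (rule foldl_ne) simp
  have Yf_ge: "\<forall>y\<in>set Yf. 2 \<le> y"
  proof -
    obtain b0 bs' where bsc: "bs = b0 # bs'" using assms(4) by (cases bs) auto
    have "\<forall>y\<in>set (st [1] b0). 2 \<le> y" by (simp add: st_def)
    then show ?thesis unfolding Yf_def bsc by (simp add: foldl_ge)
  qed
  have prev: "prd (rev Yf) = M2 x (-z) (-y) w" using xyzw by (simp add: prd_rev)
  have hjY: "hj (rev Yf) = of_int x / of_int (- y)"
    using hj_prd[OF _ _ prev] Yf_ne Yf_ge by simp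
  have hjY2: "hj (rev Yf) = hj as"
  proof -
    have "(of_nat (p^2 - p*q + 1) :: rat) = of_int (int p ^ 2 - int p * int q + 1)"
      using pq2 by (simp add: of_nat_diff)
    then show ?thesis using hjY xy assms(9) by simp
  qed
  have as_eq: "as = rev Yf"
    using hj_inj[OF assms(7) _ assms(8) _ hjY2[symmetric]] Yf_ne Yf_ge by simp
  have tgt: "rev (drop (delta_col bs + 1) as) = Yp"
    using as_eq T'(2) lenT'[symmetric] by simp
  have g0: "greach (half_chain bs) (take i0 bs @ [d + 1])" using greach_refl[of "half_chain bs"] half by simp
  have g1: "greach (half_chain bs) (take i0 bs @ Suc (d + 1) # 1 # [])" using greach_E[OF g0] by simp
  have g2: "greach (half_chain bs) (take i0 bs @ (Suc (d + 1) + k) # 1 # replicate k 2 @ [])"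
    by (rule gR[OF g1])
  have e2: "Suc (d + 1) + k = bs!i0" unfolding k_def using bd by simp
  have g3: "greach (half_chain bs) ((take i0 bs @ [bs!i0]) @ 1 # replicate k 2)" using g2 e2 by simp
  have rows2: "\<forall>b\<in>set rows. 2 \<le> b" unfolding rows_def using bs2 by (auto dest: in_set_dropD)
  have g4: "greach (half_chain bs) ((take i0 bs @ [bs!i0]) @ rows @ 1 # Yp)"
    unfolding Yp_def by (rule grows[OF rows2 g3])
  have "greach (half_chain bs) ((take i0 bs @ bs!i0 # rows) @ 1 # Yp)" using g4 by simp
  then have "greach (half_chain bs) (bs @ 1 # Yp)" by (simp only: bsdec[symmetric])
  then have g5: "greach (half_chain bs) (bs @ [1] @ rev (drop (delta_col bs + 1) as))"
    using tgt by simp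
  show ?thesis by (rule greach_iso[OF g5])
qed


end
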